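(* If $M\subseteq\mathbb{N}$ is a finite strongly 3-separating set, then there exists $x\in\mathbb{N}\setminus M$ such that $M\cup\{x\}$ is also strongly 3-separating.
   Context: $\mathbb{N}=\{1,2,3,\dots\}$. A set $M\subseteq\mathbb{N}$ is 3-separating if $|M|\geq 3$ and for any two triples $(m_1,m_2,m_3)$ and $(n_1,n_2,n_3)$, each consisting of three distinct elements of $M$, we have $n_2(m_3-m_1)=n_1(m_3-m_2)+n_3(m_2-m_1)$ if and only if $(m_1,m_2,m_3)=(n_1,n_2,n_3)$. A set $M$ is strongly 3-separating if it is 3-separating and moreover for any two pairs $(m_1,m_2)$, $(n_1,n_2)$, each consisting of two distinct elements of $M$, we have $m_1-m_2+n_2-n_1=0$ if and only if $(m_1,m_2)=(n_1,n_2)$. *)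

theory Defs
  imports Main
begin

text \<open>Natural numbers here are the positive integers; a subset of \<open>\<nat> = {1,2,3,...}\<close>
  is modelled as a set of type \<open>nat set\<close> not containing 0. Arithmetic in the
  defining equations is carried out in \<open>int\<close>.\<close>

definition three_separating :: "nat set \<Rightarrow> bool" where
  "three_separating M \<longleftrightarrow> 0 \<notin> M \<and> card M \<ge> 3 \<and>
     (\<forall>m1\<in>M. \<forall>m2\<in>M. \<forall>m3\<in>M. \<forall>n1\<in>M. \<forall>n2\<in>M. \<forall>n3\<in>M.
        m1 \<noteq> m2 \<and> m1 \<noteq> m3 \<and> m2 \<noteq> m3 \<and> n1 \<noteq> n2 \<and> n1 \<noteq> n3 \<and> n2 \<noteq> n3 \<longrightarrow>
        (int n2 * (int m3 - int m1) = int n1 * (int m3 - int m2) + int n3 * (int m2 - int m1)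
          \<longleftrightarrow> (m1, m2, m3) = (n1, n2, n3)))"

definition strongly_three_separating :: "nat set \<Rightarrow> bool" where
  "strongly_three_separating M \<longleftrightarrow> three_separating M \<and>
     (\<forall>m1\<in>M. \<forall>m2\<in>M. \<forall>n1\<in>M. \<forall>n2\<in>M. m1 \<noteq> m2 \<and> n1 \<noteq> n2 \<longrightarrow>
        (int m1 - int m2 + int n2 - int n1 = 0 \<longleftrightarrow> (m1, m2) = (n1, n2)))"

end

theory Submission
  imports Defs
begin
definition EE :: "int \<Rightarrow> int \<Rightarrow> int \<Rightarrow> int \<Rightarrow> int \<Rightarrow> int \<Rightarrow> bool" where
  "EE m1 m2 m3 n1 n2 n3 \<longleftrightarrow> n2 * (m3 - m1) = n1 * (m3 - m2) + n3 * (m2 - m1)"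

lemma E_rows: "EE m1 m2 m3 n1 n2 n3 = EE n1 n2 n3 m1 m2 m3"
  unfolding EE_def by (simp add: algebra_simps; linarith?)
lemma E_12: "EE m1 m2 m3 n1 n2 n3 = EE m2 m1 m3 n2 n1 n3"
  unfolding EE_def by (simp add: algebra_simps; linarith?)
lemma E_23: "EE m1 m2 m3 n1 n2 n3 = EE m1 m3 m2 n1 n3 n2"
  unfolding EE_def by (simp add: algebra_simps; linarith?)
lemma E_13: "EE m1 m2 m3 n1 n2 n3 = EE m3 m2 m1 n3 n2 n1"
  unfolding EE_def by (simp add: algebra_simps; linarith?)

lemma prod_bnd: fixes a b K :: int assumes "1 \<le> a" "a \<le> K" "1 \<le> b" "b \<le> K"
  shows "1 \<le> a * b \<and> a * b \<le> K * K"
proof -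
  have "1 * 1 \<le> a * b" using assms by (intro mult_mono) auto
  moreover have "a * b \<le> K * K" using assms by (intro mult_mono) auto
  ultimately show ?thesis by simp
qed

lemma ge_X: fixes X n :: int assumes "X > 0" "n \<noteq> 0" shows "X \<le> \<bar>X * n\<bar>"
proof -
  have "X * 1 \<le> X * \<bar>n\<bar>" using assms by (intro mult_left_mono) auto
  thus ?thesis using assms by (simp add: abs_mult)
qed

lemma diff_prod_bnd: fixes a b c K :: int assumes "1 \<le> a" "a \<le> K" "1 \<le> b" "b \<le> K" "1 \<le> c" "c \<le> K"
  shows "\<bar>c * (b - a)\<bar> \<le> K * K"
proof -
  have "\<bar>b - a\<bar> \<le> K" using assms by linarith
  hence "\<bar>c\<bar> * \<bar>b - a\<bar> \<le> K * K" using assms by (intro mult_mono) auto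
  thus ?thesis by (simp add: abs_mult)
qed

lemma coreA: fixes a b c d e K X :: int
  assumes "1 \<le> a" "a \<le> K" "1 \<le> b" "b \<le> K" "1 \<le> c" "c \<le> K" "1 \<le> d" "d \<le> K" "1 \<le> e" "e \<le> K"
    "c \<noteq> d" "X > 2*K*K"
  shows "\<not> EE a b X c d e"
proof
  assume h: "EE a b X c d e"
  have eq: "X * (d - c) = d * a - c * b + e * (b - a)" using h unfolding EE_def by (simp add: algebra_simps)
  have "0 \<le> 2*K*K" using assms by simp
  hence "X > 0" using assms by linarith
  hence "\<bar>X * (d - c)\<bar> \<ge> X" using assms by (intro ge_X) auto
  moreover have "\<bar>e * (b - a)\<bar> \<le> K * K" using diff_prod_bnd assms by blast
  moreover have "1 \<le> d * a \<and> d * a \<le> K * K" using prod_bnd assms by blast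
  moreover have "1 \<le> c * b \<and> c * b \<le> K * K" using prod_bnd assms by blast
  ultimately show False using eq assms by linarith
qed

lemma coreB: fixes a b c d K X :: int
  assumes "1 \<le> a" "a \<le> K" "1 \<le> b" "b \<le> K" "1 \<le> c" "c \<le> K" "1 \<le> d" "d \<le> K"
    "X > 2*K*K" "EE a b X c d X"
  shows "b - a = d - c"
proof (rule ccontr)
  assume ne: "b - a \<noteq> d - c"
  have eq: "X * (d - c - b + a) = d * a - c * b" using assms(10) unfolding EE_def by (simp add: algebra_simps)
  have "0 \<le> 2*K*K" using assms by simp
  hence "X > 0" using assms by linarith
  hence "\<bar>X * (d - c - b + a)\<bar> \<ge> X" using assms ne by (intro ge_X) auto
  moreover have "1 \<le> d * a \<and> d * a \<le> K * K" using prod_bnd assms by blast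
  moreover have "1 \<le> c * b \<and> c * b \<le> K * K" using prod_bnd assms by blast
  ultimately show False using eq assms by linarith
qed

lemma coreC: fixes a b d e K X :: int
  assumes "1 \<le> a" "a \<le> K" "1 \<le> b" "b \<le> K" "1 \<le> d" "d \<le> K" "1 \<le> e" "e \<le> K"
    "X > 2*K*K" "X > 2*K"
  shows "\<not> EE a b X X d e"
proof
  assume h: "EE a b X X d e"
  have eq: "X * (X - (b + d)) + d * a + e * (b - a) = 0" using h unfolding EE_def by (simp add: algebra_simps)
  have "X - (b + d) \<ge> 1" using assms by linarith
  hence "X * (X - (b + d)) \<ge> X * 1" using assms by (intro mult_left_mono) auto
  moreover have "\<bar>e * (b - a)\<bar> \<le> K * K" using diff_prod_bnd assms by blast
  moreover have "1 \<le> d * a \<and> d * a \<le> K * K" using prod_bnd assms by blast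
  ultimately show False using eq assms by linarith
qed
lemma P13: "EE m1 m2 m3 n1 n2 n3 = EE m3 m2 m1 n3 n2 n1"
  unfolding EE_def by (simp add: algebra_simps; linarith?)
lemma Pcyc: "EE m1 m2 m3 n1 n2 n3 = EE m2 m3 m1 n2 n3 n1"
  unfolding EE_def by (simp add: algebra_simps; linarith?)
lemma Prow: "EE m1 m2 m3 n1 n2 n3 = EE n1 n2 n3 m1 m2 m3"
  unfolding EE_def by (simp add: algebra_simps; linarith?)
lemma Prowcyc: "EE m1 m2 m3 n1 n2 n3 = EE n2 n3 n1 m2 m3 m1"
  unfolding EE_def by (simp add: algebra_simps; linarith?)
lemma Prow12: "EE m1 m2 m3 n1 n2 n3 = EE n2 n1 n3 m2 m1 m3"
  unfolding EE_def by (simp add: algebra_simps; linarith?)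
lemma P12: "EE m1 m2 m3 n1 n2 n3 = EE m2 m1 m3 n2 n1 n3"
  unfolding EE_def by (simp add: algebra_simps; linarith?)
lemma P23: "EE m1 m2 m3 n1 n2 n3 = EE m1 m3 m2 n1 n3 n2"
  unfolding EE_def by (simp add: algebra_simps; linarith?)
lemma Prow13: "EE m1 m2 m3 n1 n2 n3 = EE n3 n2 n1 m3 m2 m1"
  unfolding EE_def by (simp add: algebra_simps; linarith?)
lemma Prow23: "EE m1 m2 m3 n1 n2 n3 = EE n1 n3 n2 m1 m3 m2"
  unfolding EE_def by (simp add: algebra_simps; linarith?)

lemma natA: fixes M :: "nat set" and K x a b c d e :: nat
  assumes "\<forall>v\<in>M. 1 \<le> v \<and> v \<le> K" "2*K*K < x" "a\<in>M" "b\<in>M" "c\<in>M" "d\<in>M" "e\<in>M" "c \<noteq> d"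
  shows "\<not> EE (int a) (int b) (int x) (int c) (int d) (int e)"
proof -
  have "int (2*K*K) < int x" using assms(2) by (simp only: of_nat_less_iff)
  hence X: "2 * int K * int K < int x" by simp
  show ?thesis using assms by (intro coreA[OF _ _ _ _ _ _ _ _ _ _ _ X]) auto
qed

lemma natB: fixes M :: "nat set" and K x a b c d :: nat
  assumes "\<forall>v\<in>M. 1 \<le> v \<and> v \<le> K" "2*K*K < x" "a\<in>M" "b\<in>M" "c\<in>M" "d\<in>M"
   "EE (int a) (int b) (int x) (int c) (int d) (int x)"
  shows "int b - int a = int d - int c"
proof -
  have "int (2*K*K) < int x" using assms(2) by (simp only: of_nat_less_iff)
  hence X: "2 * int K * int K < int x" by simp
  show ?thesis using assms by (intro coreB[OF _ _ _ _ _ _ _ _ X]) auto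
qed

lemma natC: fixes M :: "nat set" and K x a b d e :: nat
  assumes "\<forall>v\<in>M. 1 \<le> v \<and> v \<le> K" "2*K*K < x" "2*K < x" "a\<in>M" "b\<in>M" "d\<in>M" "e\<in>M"
  shows "\<not> EE (int a) (int b) (int x) (int x) (int d) (int e)"
proof -
  have "int (2*K*K) < int x" "int (2*K) < int x" using assms(2,3) by (simp_all only: of_nat_less_iff)
  hence X: "2 * int K * int K < int x" "2 * int K < int x" by simp_all
  show ?thesis using assms by (intro coreC[OF _ _ _ _ _ _ _ _ X]) auto
qed

lemma key:
  fixes M :: "nat set" and m1 m2 m3 n1 n2 n3 K x :: nat
  assumes bnd: "\<forall>v\<in>M. 1 \<le> v \<and> v \<le> K" and X: "2*K*K < x" "2*K < x" and xM: "x \<notin> M"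
    and sep3: "\<forall>m1\<in>M. \<forall>m2\<in>M. \<forall>m3\<in>M. \<forall>n1\<in>M. \<forall>n2\<in>M. \<forall>n3\<in>M.
        m1 \<noteq> m2 \<and> m1 \<noteq> m3 \<and> m2 \<noteq> m3 \<and> n1 \<noteq> n2 \<and> n1 \<noteq> n3 \<and> n2 \<noteq> n3 \<longrightarrow>
        EE (int m1) (int m2) (int m3) (int n1) (int n2) (int n3) \<longrightarrow> (m1, m2, m3) = (n1, n2, n3)"
    and strong: "\<forall>a\<in>M. \<forall>b\<in>M. \<forall>c\<in>M. \<forall>d\<in>M. a \<noteq> b \<longrightarrow> c \<noteq> d \<longrightarrow>
        int b - int a = int d - int c \<longrightarrow> a = c \<and> b = d"
    and mem: "m1 \<in> insert x M" "m2 \<in> insert x M" "m3 \<in> insert x M"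
      "n1 \<in> insert x M" "n2 \<in> insert x M" "n3 \<in> insert x M"
    and dist: "m1 \<noteq> m2" "m1 \<noteq> m3" "m2 \<noteq> m3" "n1 \<noteq> n2" "n1 \<noteq> n3" "n2 \<noteq> n3"
    and E: "EE (int m1) (int m2) (int m3) (int n1) (int n2) (int n3)"
  shows "(m1, m2, m3) = (n1, n2, n3)"
proof -
  have m: "(m1 = x \<and> m2 \<in> M \<and> m3 \<in> M) \<or> (m2 = x \<and> m1\<in>M \<and> m3\<in>M) \<or> (m3 = x \<and> m1\<in>M \<and> m2\<in>M) \<or> (m1\<in>M\<and>m2\<in>M\<and>m3\<in>M)"
    using mem dist by auto
  have n: "(n1 = x \<and> n2 \<in> M \<and> n3 \<in> M) \<or> (n2 = x \<and> n1\<in>M \<and> n3\<in>M) \<or> (n3 = x \<and> n1\<in>M \<and> n2\<in>M) \<or> (n1\<in>M\<and>n2\<in>M\<and>n3\<in>M)"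
    using mem dist by auto
  from m n show ?thesis
  proof (elim disjE conjE)
    assume h: "m1 = x" "n1 = x" "m2 \<in> M" "m3 \<in> M" "n2 \<in> M" "n3 \<in> M"
    have "EE (int m3) (int m2) (int x) (int n3) (int n2) (int x)" using P13[THEN iffD1, OF E] h by simp
    hence "int m2 - int m3 = int n2 - int n3" using natB[OF bnd X(1), of m3 m2 n3 n2] h by simp
    hence "m3 = n3 \<and> m2 = n2" using strong[rule_format, of m3 m2 n3 n2] h dist by simp
    thus ?thesis using h by simp
  next
    assume h: "m1 = x" "n2 = x" "m2 \<in> M" "m3 \<in> M" "n1 \<in> M" "n3 \<in> M"
    have "EE (int m2) (int m3) (int x) (int x) (int n3) (int n1)" using Pcyc[THEN iffD1, OF E] h by simp
    thus ?thesis using natC[OF bnd X, of m2 m3 n3 n1] h by simp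
  next
    assume h: "m1 = x" "n3 = x" "m2 \<in> M" "m3 \<in> M" "n1 \<in> M" "n2 \<in> M"
    have "EE (int n1) (int n2) (int x) (int x) (int m2) (int m3)" using Prow[THEN iffD1, OF E] h by simp
    thus ?thesis using natC[OF bnd X, of n1 n2 m2 m3] h by simp
  next
    assume h: "m1 = x" "m2 \<in> M" "m3 \<in> M" "n1 \<in> M" "n2 \<in> M" "n3 \<in> M"
    have "EE (int m3) (int m2) (int x) (int n3) (int n2) (int n1)" using P13[THEN iffD1, OF E] h by simp
    thus ?thesis using natA[OF bnd X(1), of m3 m2 n3 n2 n1] h dist by simp
  next
    assume h: "m2 = x" "n1 = x" "m1 \<in> M" "m3 \<in> M" "n2 \<in> M" "n3 \<in> M"
    have "EE (int n2) (int n3) (int x) (int x) (int m3) (int m1)" using Prowcyc[THEN iffD1, OF E] h by simp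
    thus ?thesis using natC[OF bnd X, of n2 n3 m3 m1] h by simp
  next
    assume h: "m2 = x" "n2 = x" "m1 \<in> M" "m3 \<in> M" "n1 \<in> M" "n3 \<in> M"
    have "EE (int m1) (int m3) (int x) (int n1) (int n3) (int x)" using P23[THEN iffD1, OF E] h by simp
    hence "int m3 - int m1 = int n3 - int n1" using natB[OF bnd X(1), of m1 m3 n1 n3] h by simp
    hence "m1 = n1 \<and> m3 = n3" using strong[rule_format, of m1 m3 n1 n3] h dist by simp
    thus ?thesis using h by simp
  next
    assume h: "m2 = x" "n3 = x" "m1 \<in> M" "m3 \<in> M" "n1 \<in> M" "n2 \<in> M"
    have "EE (int n2) (int n1) (int x) (int x) (int m1) (int m3)" using Prow12[THEN iffD1, OF E] h by simp
    thus ?thesis using natC[OF bnd X, of n2 n1 m1 m3] h by simp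
  next
    assume h: "m2 = x" "m1 \<in> M" "m3 \<in> M" "n1 \<in> M" "n2 \<in> M" "n3 \<in> M"
    have "EE (int m1) (int m3) (int x) (int n1) (int n3) (int n2)" using P23[THEN iffD1, OF E] h by simp
    thus ?thesis using natA[OF bnd X(1), of m1 m3 n1 n3 n2] h dist by simp
  next
    assume h: "m3 = x" "n1 = x" "m1 \<in> M" "m2 \<in> M" "n2 \<in> M" "n3 \<in> M"
    have "EE (int m1) (int m2) (int x) (int x) (int n2) (int n3)" using E h by simp
    thus ?thesis using natC[OF bnd X, of m1 m2 n2 n3] h by simp
  next
    assume h: "m3 = x" "n2 = x" "m1 \<in> M" "m2 \<in> M" "n1 \<in> M" "n3 \<in> M"
    have "EE (int m2) (int m1) (int x) (int x) (int n1) (int n3)" using P12[THEN iffD1, OF E] h by simp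
    thus ?thesis using natC[OF bnd X, of m2 m1 n1 n3] h by simp
  next
    assume h: "m3 = x" "n3 = x" "m1 \<in> M" "m2 \<in> M" "n1 \<in> M" "n2 \<in> M"
    have "EE (int m1) (int m2) (int x) (int n1) (int n2) (int x)" using E h by simp
    hence "int m2 - int m1 = int n2 - int n1" using natB[OF bnd X(1), of m1 m2 n1 n2] h by simp
    hence "m1 = n1 \<and> m2 = n2" using strong[rule_format, of m1 m2 n1 n2] h dist by simp
    thus ?thesis using h by simp
  next
    assume h: "m3 = x" "m1 \<in> M" "m2 \<in> M" "n1 \<in> M" "n2 \<in> M" "n3 \<in> M"
    have "EE (int m1) (int m2) (int x) (int n1) (int n2) (int n3)" using E h by simp
    thus ?thesis using natA[OF bnd X(1), of m1 m2 n1 n2 n3] h dist by simp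
  next
    assume h: "n1 = x" "m1 \<in> M" "m2 \<in> M" "m3 \<in> M" "n2 \<in> M" "n3 \<in> M"
    have "EE (int n3) (int n2) (int x) (int m3) (int m2) (int m1)" using Prow13[THEN iffD1, OF E] h by simp
    thus ?thesis using natA[OF bnd X(1), of n3 n2 m3 m2 m1] h dist by simp
  next
    assume h: "n2 = x" "m1 \<in> M" "m2 \<in> M" "m3 \<in> M" "n1 \<in> M" "n3 \<in> M"
    have "EE (int n1) (int n3) (int x) (int m1) (int m3) (int m2)" using Prow23[THEN iffD1, OF E] h by simp
    thus ?thesis using natA[OF bnd X(1), of n1 n3 m1 m3 m2] h dist by simp
  next
    assume h: "n3 = x" "m1 \<in> M" "m2 \<in> M" "m3 \<in> M" "n1 \<in> M" "n2 \<in> M"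
    have "EE (int n1) (int n2) (int x) (int m1) (int m2) (int m3)" using Prow[THEN iffD1, OF E] h by simp
    thus ?thesis using natA[OF bnd X(1), of n1 n2 m1 m2 m3] h dist by simp
  next
    assume h: "m1 \<in> M" "m2 \<in> M" "m3 \<in> M" "n1 \<in> M" "n2 \<in> M" "n3 \<in> M"
    show ?thesis using sep3[rule_format, of m1 m2 m3 n1 n2 n3] h dist E by simp
  qed
qed
lemma strong_ins:
  fixes M :: "nat set" and m1 m2 n1 n2 K x :: nat
  assumes bnd: "\<forall>v\<in>M. 1 \<le> v \<and> v \<le> K" and X: "2*K < x" and xM: "x \<notin> M"
    and strongM: "\<forall>m1\<in>M. \<forall>m2\<in>M. \<forall>n1\<in>M. \<forall>n2\<in>M. m1 \<noteq> m2 \<and> n1 \<noteq> n2 \<longrightarrow>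
        (int m1 - int m2 + int n2 - int n1 = 0 \<longleftrightarrow> (m1, m2) = (n1, n2))"
    and mem: "m1 \<in> insert x M" "m2 \<in> insert x M" "n1 \<in> insert x M" "n2 \<in> insert x M"
    and dist: "m1 \<noteq> m2" "n1 \<noteq> n2"
    and E: "int m1 - int m2 + int n2 - int n1 = 0"
  shows "(m1, m2) = (n1, n2)"
proof -
  have b: "v = x \<or> (v \<in> M \<and> 1 \<le> v \<and> v \<le> K)" if "v \<in> insert x M" for v using that bnd by auto
  have E': "m1 + n2 = m2 + n1" using E by linarith
  from b[OF mem(1)] b[OF mem(2)] b[OF mem(3)] b[OF mem(4)] show ?thesis
  proof (elim disjE conjE)
    assume "m1 \<in> M" "m2 \<in> M" "n1 \<in> M" "n2 \<in> M"
    thus ?thesis using strongM[rule_format, of m1 m2 n1 n2] dist E by simp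
  qed (use E' dist X in auto)
qed
theorem lemma2p4:
  fixes M :: "nat set"
  assumes "finite M" and "strongly_three_separating M"
  shows "\<exists>x. x \<noteq> 0 \<and> x \<notin> M \<and> strongly_three_separating (insert x M)"
proof -
  have s3: "three_separating M" and sM: "\<forall>m1\<in>M. \<forall>m2\<in>M. \<forall>n1\<in>M. \<forall>n2\<in>M. m1 \<noteq> m2 \<and> n1 \<noteq> n2 \<longrightarrow>
        (int m1 - int m2 + int n2 - int n1 = 0 \<longleftrightarrow> (m1, m2) = (n1, n2))"
    using assms(2) unfolding strongly_three_separating_def by auto
  have z: "0 \<notin> M" and c3: "card M \<ge> 3" using s3 unfolding three_separating_def by auto
  have sep3: "\<forall>m1\<in>M. \<forall>m2\<in>M. \<forall>m3\<in>M. \<forall>n1\<in>M. \<forall>n2\<in>M. \<forall>n3\<in>M.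
        m1 \<noteq> m2 \<and> m1 \<noteq> m3 \<and> m2 \<noteq> m3 \<and> n1 \<noteq> n2 \<and> n1 \<noteq> n3 \<and> n2 \<noteq> n3 \<longrightarrow>
        EE (int m1) (int m2) (int m3) (int n1) (int n2) (int n3) \<longrightarrow> (m1, m2, m3) = (n1, n2, n3)"
    using s3 unfolding three_separating_def EE_def by blast
  have strong: "\<forall>a\<in>M. \<forall>b\<in>M. \<forall>c\<in>M. \<forall>d\<in>M. a \<noteq> b \<longrightarrow> c \<noteq> d \<longrightarrow>
        int b - int a = int d - int c \<longrightarrow> a = c \<and> b = d"
  proof (intro ballI impI)
    fix a b c d assume h: "a \<in> M" "b \<in> M" "c \<in> M" "d \<in> M" "a \<noteq> b" "c \<noteq> d" "int b - int a = int d - int c"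
    have "int b - int a + int c - int d = 0" using h by linarith
    thus "a = c \<and> b = d" using sM[rule_format, of b a d c] h by auto
  qed
  define K where "K = Max M"
  define x where "x = 4*K*K + 1"
  have bnd: "\<forall>v\<in>M. 1 \<le> v \<and> v \<le> K" using z assms(1) unfolding K_def
    by (metis Max_ge less_one linorder_not_le)
  have X: "2*K*K < x" "2*K < x" unfolding x_def
    by (simp_all add: mult_le_mono) (cases K; simp)
  have xM: "x \<notin> M" using bnd X by fastforce
  have "strongly_three_separating (insert x M)"
    unfolding strongly_three_separating_def three_separating_def
  proof (intro conjI ballI impI)
    show "0 \<notin> insert x M" using z X by auto
    show "3 \<le> card (insert x M)" using c3 assms(1) xM by simp
  next
    fix m1 m2 m3 n1 n2 n3 assume mem: "m1 \<in> insert x M" "m2 \<in> insert x M" "m3 \<in> insert x M"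
      "n1 \<in> insert x M" "n2 \<in> insert x M" "n3 \<in> insert x M"
      and d: "m1 \<noteq> m2 \<and> m1 \<noteq> m3 \<and> m2 \<noteq> m3 \<and> n1 \<noteq> n2 \<and> n1 \<noteq> n3 \<and> n2 \<noteq> n3"
    show "(int n2 * (int m3 - int m1) = int n1 * (int m3 - int m2) + int n3 * (int m2 - int m1)) =
          ((m1, m2, m3) = (n1, n2, n3))"
    proof
      assume "int n2 * (int m3 - int m1) = int n1 * (int m3 - int m2) + int n3 * (int m2 - int m1)"
      hence "EE (int m1) (int m2) (int m3) (int n1) (int n2) (int n3)" unfolding EE_def .
      thus "(m1, m2, m3) = (n1, n2, n3)" using key[OF bnd X xM sep3 strong mem] d by blast
    next
      assume "(m1, m2, m3) = (n1, n2, n3)"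
      thus "int n2 * (int m3 - int m1) = int n1 * (int m3 - int m2) + int n3 * (int m2 - int m1)"
        by (simp add: algebra_simps)
    qed
  next
    fix m1 m2 n1 n2 assume mem: "m1 \<in> insert x M" "m2 \<in> insert x M" "n1 \<in> insert x M" "n2 \<in> insert x M"
      and d: "m1 \<noteq> m2 \<and> n1 \<noteq> n2"
    show "(int m1 - int m2 + int n2 - int n1 = 0) = ((m1, m2) = (n1, n2))"
      using strong_ins[OF bnd X(2) xM sM mem] d by auto
  qed
  moreover have "x \<noteq> 0" unfolding x_def by simp
  ultimately show ?thesis using xM by blast
qed

end
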